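(* For $1\le i\le r$, $C_{i,r}=G_{i,r-i+2}$.
   Context: Bernoulli numbers $B_n$: $\sum_{n\ge0}B_n x^n/n! = xe^x/(e^x-1)$. For $1\le i\le r$, $C_{i,r}=(-1)^r\sum\prod_{j=1}^rB_{n_j}/n_j!$, the sum over $(n_1,\dots,n_r)\in\mathbb Z_{\ge0}^r$ with $n_1+\dots+n_r=r$, $n_1+\dots+n_j<j$ ($1\le j<i$), and $n_{j+1}+\dots+n_r\le r-j$ ($i\le j<r$). (These are the coefficients of $(\epsilon_i+\dots+\epsilon_r)/(\epsilon_1+\dots+\epsilon_r)$-type terms in the asymptotic expansion of the Euler–Zagier multiple zeta function $\zeta(\epsilon_1,\dots,\epsilon_r)$ at the origin.) The generalized Gregory coefficients $G_{m,n}\in\mathbb Q$ ($m,n\ge0$) are defined by the formal power series identity \[ \sum_{m,n\ge0}G_{m,n}x^my^n=\frac{y\log^2(1+x)-x\log^2(1+y)}{\log(1+x)-\log(1+y)}, \] where $\log^k u=(\log u)^k$. *)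

theory Defs
  imports "HOL-Computational_Algebra.Formal_Power_Series"
begin

text \<open>Bernoulli numbers with generating function x e^x/(e^x - 1), i.e. B_1 = 1/2.
  The generating series is the unique formal power series f with
  f * (e^x - 1) = x e^x (unique since rat fps is an integral domain).\<close>
definition bernoulli_fps :: "rat fps" where
  "bernoulli_fps = (THE f. f * (fps_exp 1 - 1) = fps_X * fps_exp 1)"

definition bernoulli :: "nat \<Rightarrow> rat" where
  "bernoulli n = fact n * fps_nth bernoulli_fps n"

text \<open>C_{i,r}: tuples (n_1,...,n_r) are lists ns of length r, n_j = ns ! (j-1).\<close>
definition C_tuples :: "nat \<Rightarrow> nat \<Rightarrow> nat list set" where
  "C_tuples i r = {ns. length ns = r \<and> sum_list ns = r
      \<and> (\<forall>j. 1 \<le> j \<and> j < i \<longrightarrow> (\<Sum>k=1..j. ns ! (k - 1)) < j)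
      \<and> (\<forall>j. i \<le> j \<and> j < r \<longrightarrow> (\<Sum>k=j+1..r. ns ! (k - 1)) \<le> r - j)}"

definition C_coeff :: "nat \<Rightarrow> nat \<Rightarrow> rat" where
  "C_coeff i r = (-1) ^ r * (\<Sum>ns\<in>C_tuples i r.
      \<Prod>j=1..r. bernoulli (ns ! (j - 1)) / fact (ns ! (j - 1)))"

definition log1p_fps :: "rat fps" where
  "log1p_fps = Abs_fps (\<lambda>n. if n = 0 then 0 else (-1) ^ (n + 1) / of_nat n)"

text \<open>Bivariate power series in x, y as rat fps fps: the outer variable is y,
  the inner (coefficient) variable is x.  Coefficient of x^m y^n of F is
  fps_nth (fps_nth F n) m.\<close>
definition bvX :: "rat fps fps" where "bvX = fps_const fps_X"
definition bvY :: "rat fps fps" where "bvY = fps_X"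
definition bvLx :: "rat fps fps" where "bvLx = fps_const log1p_fps"
definition bvLy :: "rat fps fps" where
  "bvLy = Abs_fps (\<lambda>n. fps_const (fps_nth log1p_fps n))"

definition gregory_fps :: "rat fps fps" where
  "gregory_fps = (THE g. (bvLx - bvLy) * g = bvY * bvLx ^ 2 - bvX * bvLy ^ 2)"

definition G :: "nat \<Rightarrow> nat \<Rightarrow> rat" where
  "G m n = fps_nth (fps_nth gregory_fps n) m"

end

theory Submission
  imports Defs
begin
unbundle fps_syntax


definition E1 :: "rat fps" where "E1 = Abs_fps (\<lambda>n. 1 / fact (Suc n))"

lemma exp_minus_one: "fps_exp 1 - 1 = fps_X * E1"
  by (auto simp: fps_eq_iff E1_def fps_X_mult_nth; case_tac n; simp)

lemma bern_exists: "(fps_exp 1 * inverse E1) * (fps_exp 1 - 1) = fps_X * fps_exp (1::rat)"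
proof -
  have "E1 $ 0 \<noteq> 0" by (simp add: E1_def)
  hence "inverse E1 * E1 = 1" by (rule inverse_mult_eq_1)
  thus ?thesis unfolding exp_minus_one by (metis (no_types, lifting) mult.assoc mult.commute mult.left_commute mult_1)
qed

lemma exp_m1_nz: "fps_exp 1 - 1 \<noteq> (0::rat fps)"
proof
  assume "fps_exp 1 - 1 = (0::rat fps)"
  hence "(fps_exp 1 - 1) $ 1 = (0::rat fps) $ 1" by simp
  thus False by simp
qed

lemma bern_eq: "bernoulli_fps * (fps_exp 1 - 1) = fps_X * fps_exp 1"
proof -
  have "bernoulli_fps = fps_exp 1 * inverse E1"
    unfolding bernoulli_fps_def
  proof (rule the_equality)
    show "fps_exp 1 * inverse E1 * (fps_exp 1 - 1) = fps_X * fps_exp 1" by (rule bern_exists)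
    fix f assume "f * (fps_exp 1 - 1) = fps_X * fps_exp (1::rat)"
    hence "f * (fps_exp 1 - 1) = (fps_exp 1 * inverse E1) * (fps_exp 1 - 1)" using bern_exists by simp
    thus "f = fps_exp 1 * inverse E1" using exp_m1_nz by simp
  qed
  thus ?thesis using bern_exists by simp
qed

lemma bern0: "bernoulli_fps $ 0 = 1"
proof -
  have "bernoulli_fps = fps_exp 1 * inverse E1"
    unfolding bernoulli_fps_def
  proof (rule the_equality)
    show "fps_exp 1 * inverse E1 * (fps_exp 1 - 1) = fps_X * fps_exp 1" by (rule bern_exists)
    fix f assume "f * (fps_exp 1 - 1) = fps_X * fps_exp (1::rat)"
    hence "f * (fps_exp 1 - 1) = (fps_exp 1 * inverse E1) * (fps_exp 1 - 1)" using bern_exists by simp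
    thus "f = fps_exp 1 * inverse E1" using exp_m1_nz by simp
  qed
  moreover have "(fps_exp 1 * inverse E1) $ 0 = 1" by (simp add: E1_def)
  ultimately show ?thesis by simp
qed

lemma log1p_eq: "log1p_fps = fps_ln 1"
  by (auto simp: fps_eq_iff log1p_fps_def fps_ln_nth; case_tac n; simp)

definition MM :: "rat fps" where "MM = - log1p_fps"

lemma MM0[simp]: "MM $ 0 = 0" by (simp add: MM_def log1p_fps_def)

lemma expL: "fps_exp 1 oo log1p_fps = 1 + fps_X"
proof -
  have "(fps_exp 1 - 1) oo fps_inv (fps_exp 1 - 1) = (fps_X :: rat fps)"
    by (rule fps_inv_right) simp_all
  hence "(fps_exp 1 oo log1p_fps) - 1 = fps_X"
    by (simp add: log1p_eq fps_ln_fps_exp_inv[symmetric] fps_compose_sub_distrib)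
  thus ?thesis by (simp add: algebra_simps)
qed

lemma expM: "(fps_exp 1 oo MM) * (1 + fps_X) = 1"
proof -
  have L0: "log1p_fps $ 0 = 0" by (simp add: log1p_fps_def)
  have "MM = (-fps_X) oo log1p_fps"
    by (simp add: MM_def fps_compose_uminus L0)
  hence "fps_exp 1 oo MM = (fps_exp 1 oo (-fps_X)) oo log1p_fps"
    using fps_compose_assoc[OF L0, of "-fps_X" "fps_exp 1"] by simp
  also have "\<dots> = inverse (fps_exp 1) oo log1p_fps" by (simp add: fps_exp_neg)
  also have "\<dots> = inverse (1 + fps_X)"
    by (subst fps_inverse_compose) (simp_all add: L0 expL)
  finally show ?thesis by (simp add: inverse_mult_eq_1)
qed

lemma key: "fps_X * (bernoulli_fps oo MM) = - MM"
proof -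
  have "(bernoulli_fps * (fps_exp 1 - 1)) oo MM = (fps_X * fps_exp 1) oo MM"
    using bern_eq by simp
  hence "(bernoulli_fps oo MM) * ((fps_exp 1 oo MM) - 1) = MM * (fps_exp 1 oo MM)"
    by (simp add: fps_compose_mult_distrib fps_compose_sub_distrib)
  hence "(bernoulli_fps oo MM) * ((fps_exp 1 oo MM) - 1) * (1 + fps_X) = MM * ((fps_exp 1 oo MM) * (1 + fps_X))"
    by (simp add: mult.assoc)
  hence "(bernoulli_fps oo MM) * (1 - (1 + fps_X)) = MM"
    using expM by (metis (no_types, lifting) mult.assoc mult.commute mult_1 right_diff_distrib')
  thus ?thesis by (metis add_diff_cancel_left' minus_diff_eq minus_mult_left mult.commute mult_1)
qed



lemma pow_nth_zero: "(g::'a::comm_semiring_1 fps) $ 0 = 0 \<Longrightarrow> d < n \<Longrightarrow> (g^n) $ d = 0"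
proof (induction n arbitrary: d)
  case 0 thus ?case by simp
next
  case (Suc n)
  have "(g^Suc n) $ d = (\<Sum>i=0..d. g$i * (g^n)$(d-i))" by (simp add: fps_mult_nth)
  also have "\<dots> = 0"
  proof (rule sum.neutral, intro ballI)
    fix i assume "i \<in> {0..d}"
    show "g$i * (g^n)$(d-i) = 0"
    proof (cases "i = 0")
      case True thus ?thesis using Suc.prems by simp
    next
      case False thus ?thesis using Suc.prems \<open>i \<in> {0..d}\<close> Suc.IH[of "d-i"] by simp
    qed
  qed
  finally show ?case .
qed

lemma compose_prod_nth:
  fixes f g h :: "'a::comm_semiring_1 fps"
  assumes g0: "g $ 0 = 0"
  shows "(h * (f oo g)) $ m = (\<Sum>n=0..m. f$n * (h * g^n) $ m)"
proof -
  have "(h * (f oo g)) $ m = (\<Sum>a=0..m. h$a * (\<Sum>n=0..m-a. f$n * (g^n)$(m-a)))"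
    by (simp add: fps_mult_nth fps_compose_nth)
  also have "\<dots> = (\<Sum>a=0..m. h$a * (\<Sum>n=0..m. f$n * (g^n)$(m-a)))"
  proof (rule sum.cong[OF refl])
    fix a assume a: "a \<in> {0..m}"
    have "(\<Sum>n=0..m-a. f$n * (g^n)$(m-a)) = (\<Sum>n=0..m. f$n * (g^n)$(m-a))"
      by (rule sum.mono_neutral_left) (auto simp: pow_nth_zero[OF g0])
    thus "h$a * (\<Sum>n=0..m-a. f$n * (g^n)$(m-a)) = h$a * (\<Sum>n=0..m. f$n * (g^n)$(m-a))" by simp
  qed
  also have "\<dots> = (\<Sum>a=0..m. \<Sum>n=0..m. f$n * (h$a * (g^n)$(m-a)))"
    by (simp add: sum_distrib_left mult_ac)
  also have "\<dots> = (\<Sum>n=0..m. \<Sum>a=0..m. f$n * (h$a * (g^n)$(m-a)))"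
    by (rule sum.swap)
  also have "\<dots> = (\<Sum>n=0..m. f$n * (h * g^n) $ m)"
    by (simp add: fps_mult_nth sum_distrib_left)
  finally show ?thesis .
qed

definition AA :: "nat \<Rightarrow> nat \<Rightarrow> rat" where "AA m k = (MM^k) $ m"

lemma AA_0: "AA 0 k = (if k = 0 then 1 else 0)"
  by (simp add: AA_def fps_power_zeroth)

lemma AA_Suc_0: "AA (Suc m) 0 = 0"
  by (simp add: AA_def)

lemma AA_zero: "m < k \<Longrightarrow> AA m k = 0"
  by (simp add: AA_def pow_nth_zero)

lemma AA_Suc: "AA (Suc m) (Suc k) = - (\<Sum>n=0..m. bernoulli_fps $ n * AA m (k + n))"
proof -
  have "MM^Suc k = - (fps_X * (MM^k * (bernoulli_fps oo MM)))"
    using key by (metis (no_types, lifting) minus_equation_iff mult.left_commute mult_minus_right power_Suc2)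
  hence "AA (Suc m) (Suc k) = - ((MM^k * (bernoulli_fps oo MM)) $ m)"
    by (simp add: AA_def)
  also have "\<dots> = - (\<Sum>n=0..m. bernoulli_fps $ n * AA m (k + n))"
    by (simp add: compose_prod_nth AA_def power_add)
  finally show ?thesis .
qed

definition bb :: "nat \<Rightarrow> rat" where "bb n = bernoulli_fps $ n"
definition w :: "nat list \<Rightarrow> rat" where "w xs = prod_list (map bb xs)"

definition FP :: "nat \<Rightarrow> nat \<Rightarrow> nat list set" where
  "FP m k = {ns. length ns = m \<and> sum_list ns + k = m \<and> (\<forall>j<m. j < sum_list (take j ns) + k)}"

definition cF :: "nat \<Rightarrow> nat \<Rightarrow> rat" where "cF m k = (\<Sum>ns\<in>FP m k. w ns)"

lemma FP_sub: "FP m k \<subseteq> {xs. set xs \<subseteq> {..m} \<and> length xs = m}"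
proof
  fix xs assume "xs \<in> FP m k"
  hence "length xs = m" "sum_list xs \<le> m" by (auto simp: FP_def)
  moreover have "\<forall>x\<in>set xs. x \<le> sum_list xs" using member_le_sum_list by blast
  ultimately show "xs \<in> {xs. set xs \<subseteq> {..m} \<and> length xs = m}" by fastforce
qed

lemma FP_fin: "finite (FP m k)"
  by (rule finite_subset[OF FP_sub]) (rule finite_lists_length_eq, simp)

lemma cF_0: "cF 0 k = (if k = 0 then 1 else 0)"
proof -
  have "FP 0 k = (if k = 0 then {[]} else {})" by (auto simp: FP_def)
  thus ?thesis by (simp add: cF_def w_def)
qed

lemma cF_Suc_0: "cF (Suc m) 0 = 0"
proof -
  have "FP (Suc m) 0 = {}" by (auto simp: FP_def)
  thus ?thesis by (simp add: cF_def)
qed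

lemma cF_Suc:
  assumes "k \<ge> 1"
  shows "cF (Suc m) k = (\<Sum>n=0..m. bb n * cF m (k - 1 + n))"
proof -
  let ?S = "SIGMA n:{0..m}. FP m (k - 1 + n)"
  have "cF (Suc m) k = (\<Sum>p\<in>?S. bb (fst p) * w (snd p))"
    unfolding cF_def
  proof (rule sum.reindex_bij_witness[where i = "\<lambda>p. fst p # snd p" and j = "\<lambda>ns. (hd ns, tl ns)"])
    fix p assume "p \<in> ?S"
    thus "(hd (fst p # snd p), tl (fst p # snd p)) = p" by simp
  next
    fix p assume p: "p \<in> ?S"
    obtain n ts where pe: "p = (n, ts)" by (cases p)
    from p pe have n: "n \<le> m" and ts: "ts \<in> FP m (k - 1 + n)" by auto
    have "n # ts \<in> FP (Suc m) k"
      unfolding FP_def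
    proof (intro CollectI conjI allI impI)
      show "length (n # ts) = Suc m" using ts by (simp add: FP_def)
      show "sum_list (n # ts) + k = Suc m" using ts assms unfolding FP_def by auto
      fix j assume j: "j < Suc m"
      show "j < sum_list (take j (n # ts)) + k"
      proof (cases j)
        case 0 thus ?thesis using assms by simp
      next
        case (Suc j')
        hence "j' < m" using j by simp
        hence "j' < sum_list (take j' ts) + (k - 1 + n)" using ts by (simp add: FP_def)
        thus ?thesis using Suc assms by simp
      qed
    qed
    thus "fst p # snd p \<in> FP (Suc m) k" using pe by simp
  next
    fix ns assume ns: "ns \<in> FP (Suc m) k"
    then obtain n ts where nse: "ns = n # ts" by (cases ns) (auto simp: FP_def)
    show "fst (hd ns, tl ns) # snd (hd ns, tl ns) = ns" using nse by simp
    show "bb (fst (hd ns, tl ns)) * w (snd (hd ns, tl ns)) = w ns" using nse by (simp add: w_def)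
    have len: "length ts = m" and sm: "n + sum_list ts + k = Suc m"
      and pre: "\<forall>j<Suc m. j < sum_list (take j (n # ts)) + k" using ns nse by (auto simp: FP_def)
    have "n \<le> m" using sm assms by simp
    moreover have "ts \<in> FP m (k - 1 + n)"
      unfolding FP_def
    proof (intro CollectI conjI allI impI)
      show "length ts = m" by (rule len)
      show "sum_list ts + (k - 1 + n) = m" using sm assms by simp
      fix j assume "j < m"
      hence "Suc j < Suc m" by simp
      hence "Suc j < sum_list (take (Suc j) (n # ts)) + k" using pre by blast
      thus "j < sum_list (take j ts) + (k - 1 + n)" using assms by simp
    qed
    ultimately show "(hd ns, tl ns) \<in> ?S" using nse by simp
  qed
  also have "\<dots> = (\<Sum>n=0..m. \<Sum>ts\<in>FP m (k - 1 + n). bb n * w ts)"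
    by (subst sum.Sigma) (auto simp: FP_fin split_def)
  also have "\<dots> = (\<Sum>n=0..m. bb n * cF m (k - 1 + n))"
    by (simp add: cF_def sum_distrib_left)
  finally show ?thesis .
qed

lemma cF_AA: "cF m k = (-1)^m * AA m k"
proof (induction m arbitrary: k)
  case 0 thus ?case by (simp add: cF_0 AA_0)
next
  case (Suc m)
  show ?case
  proof (cases k)
    case 0 thus ?thesis by (simp add: cF_Suc_0 AA_Suc_0)
  next
    case (Suc k')
    have "cF (Suc m) k = (\<Sum>n=0..m. bb n * ((-1)^m * AA m (k' + n)))"
      using cF_Suc[of k m] Suc Suc.IH by simp
    also have "\<dots> = (-1)^Suc m * AA (Suc m) k"
      by (simp add: Suc AA_Suc bb_def sum_distrib_left mult_ac sum_negf)
    finally show ?thesis .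
  qed
qed



lemma FP_last:
  assumes c: "c \<in> FP (Suc q) j" and j: "j \<ge> 1"
  shows "c = butlast c @ [0]"
proof -
  from c have len: "length c = Suc q" and sm: "sum_list c + j = Suc q"
    and pre: "\<forall>t<Suc q. t < sum_list (take t c) + j" by (auto simp: FP_def)
  have ne: "c \<noteq> []" using len by auto
  hence ce: "c = butlast c @ [last c]" by simp
  have "take q c = butlast c" using len by (simp add: butlast_conv_take)
  hence "q < sum_list (butlast c) + j" using pre by auto
  moreover have "sum_list c = sum_list (butlast c) + last c" by (subst ce) simp
  ultimately have "last c = 0" using sm by linarith
  thus ?thesis using ce by simp
qed

lemma sum_take_drop: "sum_list (take n xs) + sum_list (drop n xs) = (sum_list xs :: nat)"
  by (metis append_take_drop_id sum_list_append)

lemma w_append: "w (xs @ ys) = w xs * w ys" by (simp add: w_def)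
lemma w_rev: "w (rev xs) = w xs" by (simp add: w_def rev_map[symmetric])
lemma w_cons: "w (x # xs) = bb x * w xs" by (simp add: w_def)
lemma w_zero: "w (xs @ [0]) = w xs" by (simp add: w_def bb_def bern0)

lemma sum_cart: "(\<Sum>ac\<in>A \<times> B. (x::rat) * (f (fst ac) * g (snd ac))) = x * (sum f A * sum g B)"
proof -
  have "(\<Sum>ac\<in>A \<times> B. x * (f (fst ac) * g (snd ac))) = (\<Sum>a\<in>A. \<Sum>b\<in>B. x * (f a * g b))"
    by (simp add: sum.cartesian_product split_def)
  also have "\<dots> = x * (sum f A * sum g B)"
    by (simp add: sum_distrib_left sum_distrib_right mult_ac sum.swap[of _ A])
  finally show ?thesis .
qed

definition Cp :: "nat \<Rightarrow> nat \<Rightarrow> nat list set" where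
  "Cp i r = {ns. length ns = r \<and> sum_list ns = r
      \<and> (\<forall>j. 1 \<le> j \<and> j < i \<longrightarrow> sum_list (take j ns) < j)
      \<and> (\<forall>j. i \<le> j \<and> j < r \<longrightarrow> j \<le> sum_list (take j ns))}"

lemma decomp:
  "(\<Sum>ns\<in>Cp (Suc p) (Suc (p + q)). w ns) =
   (\<Sum>k=0..p. \<Sum>n=k+1..Suc (p+q). bb n * (cF p k * cF (Suc q) (n - k)))"
proof -
  let ?r = "Suc (p + q)"
  let ?T = "SIGMA k:{0..p}. SIGMA n:{k+1..?r}. FP p k \<times> FP (Suc q) (n - k)"
  let ?i = "\<lambda>(k::nat, n::nat, a::nat list, c::nat list). rev a @ n # butlast c"
  let ?j = "\<lambda>ns::nat list. (p - sum_list (take p ns), ns ! p, rev (take p ns), drop (Suc p) ns @ [0])"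
  let ?h = "\<lambda>(k::nat, n::nat, a::nat list, c::nat list). bb n * (w a * w c)"
  have "(\<Sum>ns\<in>Cp (Suc p) ?r. w ns) = (\<Sum>b\<in>?T. ?h b)"
  proof (rule sum.reindex_bij_witness[where i = ?i and j = ?j])
    fix ns assume ns: "ns \<in> Cp (Suc p) ?r"
    have len: "length ns = ?r" and tot: "sum_list ns = ?r"
      and C1: "\<And>j. 1 \<le> j \<Longrightarrow> j < Suc p \<Longrightarrow> sum_list (take j ns) < j"
      and C2: "\<And>j. Suc p \<le> j \<Longrightarrow> j < ?r \<Longrightarrow> j \<le> sum_list (take j ns)"
      using ns by (auto simp: Cp_def)
    define Sp where "Sp = sum_list (take p ns)"
    define n where "n = ns ! p"
    define c0 where "c0 = drop (Suc p) ns"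
    have plen: "p < length ns" using len by simp
    have nsd: "ns = take p ns @ n # c0" unfolding n_def c0_def using plen by (simp add: id_take_nth_drop)
    have lc0: "length c0 = q" using len by (simp add: c0_def)
    have lt: "length (take p ns) = p" using plen by simp
    have tot2: "Sp + n + sum_list c0 = ?r" using tot nsd unfolding Sp_def by (metis add.assoc sum_list.Cons sum_list_append)
    have Spp: "Sp \<le> p"
    proof (cases p)
      case 0 thus ?thesis by (simp add: Sp_def)
    next
      case (Suc p') thus ?thesis using C1[of p] by (simp add: Sp_def)
    qed
    have takeS: "take (Suc p + t) ns = take p ns @ n # take t c0" for t
      using plen by (subst nsd) (simp add: lt min_def)
    have nk: "p < Sp + n"
    proof (cases q)
      case 0 thus ?thesis using tot2 lc0 by simp
    next
      case (Suc q')
      have "Suc p \<le> sum_list (take (Suc p + 0) ns)" using C2[of "Suc p"] Suc by simp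
      thus ?thesis using takeS[of 0] unfolding Sp_def by simp
    qed
    show "?i (?j ns) = ns"
      using nsd by (simp add: n_def c0_def)
    show "?h (?j ns) = w ns"
    proof -
      have wns: "w ns = w (take p ns) * (bb n * w c0)" using nsd w_append w_cons by metis
      show ?thesis unfolding wns by (simp add: w_rev w_zero n_def c0_def)
    qed
    have aFP: "rev (take p ns) \<in> FP p (p - Sp)"
      unfolding FP_def
    proof (intro CollectI conjI allI impI)
      show "length (rev (take p ns)) = p" using lt by simp
      show "sum_list (rev (take p ns)) + (p - Sp) = p" using Spp by (simp add: Sp_def)
      fix j' assume j': "j' < p"
      define jj where "jj = p - j'"
      have tr: "take j' (rev (take p ns)) = rev (drop jj (take p ns))"
        using lt j' by (simp add: take_rev jj_def)
      have "sum_list (take jj (take p ns)) < jj" using C1[of jj] j' by (simp add: jj_def min_def)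
      moreover have "sum_list (take jj (take p ns)) + sum_list (drop jj (take p ns)) = Sp"
        by (simp only: sum_take_drop Sp_def)
      ultimately show "j' < sum_list (take j' (rev (take p ns))) + (p - Sp)"
        using tr Spp j' unfolding jj_def by simp
    qed
    have cFP: "c0 @ [0] \<in> FP (Suc q) (n - (p - Sp))"
      unfolding FP_def
    proof (intro CollectI conjI allI impI)
      show "length (c0 @ [0]) = Suc q" using lc0 by simp
      show "sum_list (c0 @ [0]) + (n - (p - Sp)) = Suc q" using tot2 Spp nk by simp
      fix t assume t: "t < Suc q"
      show "t < sum_list (take t (c0 @ [0])) + (n - (p - Sp))"
      proof (cases "t = q")
        case True thus ?thesis using lc0 tot2 Spp nk by simp
      next
        case False
        hence tq: "t < q" using t by simp
        have "Suc p + t \<le> sum_list (take (Suc p + t) ns)" using C2[of "Suc p + t"] tq by simp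
        hence "Suc p + t \<le> Sp + n + sum_list (take t c0)" using takeS[of t] unfolding Sp_def by simp
        moreover have "take t (c0 @ [0]) = take t c0" using tq lc0 by simp
        ultimately show ?thesis using Spp nk by simp
      qed
    qed
    have "n \<le> ?r" using tot2 by simp
    thus "?j ns \<in> ?T" using aFP cFP Spp nk unfolding Sp_def[symmetric] n_def[symmetric] c0_def[symmetric]
      by auto
  next
    fix b assume b: "b \<in> ?T"
    obtain k n a c where be: "b = (k, n, a, c)" by (cases b) auto
    from b be have kp: "k \<le> p" and kn: "k < n" and nr: "n \<le> ?r" and aF: "a \<in> FP p k"
      and cF: "c \<in> FP (Suc q) (n - k)" by auto
    have la: "length a = p" "sum_list a + k = p" and apre: "\<forall>j<p. j < sum_list (take j a) + k"
      using aF by (auto simp: FP_def)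
    have la': "length a = p" using la by simp
    have ce: "c = butlast c @ [0]" using FP_last[OF cF] kn by simp
    define c0 where "c0 = butlast c"
    have lc: "length c = Suc q" and sc: "sum_list c + (n - k) = Suc q"
      and cpre: "\<forall>t<Suc q. t < sum_list (take t c) + (n - k)" using cF by (auto simp: FP_def)
    have lc0: "length c0 = q" using lc by (simp add: c0_def)
    have sc0: "sum_list c0 = sum_list c" using ce by (metis add.right_neutral c0_def sum_list.Cons sum_list.Nil sum_list_append)
    show "?j (?i b) = b" using be la' ce
      by (simp add: nth_append c0_def[symmetric] la(2)[symmetric])
    show "?i b \<in> Cp (Suc p) ?r"
      unfolding Cp_def be split c0_def[symmetric]
    proof (intro CollectI conjI allI impI)
      show "length (rev a @ n # c0) = ?r" using la' lc0 by simp
      show "sum_list (rev a @ n # c0) = ?r" using la(2) sc sc0 kn by simp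
      fix j
      assume j: "1 \<le> j \<and> j < Suc p"
      have tk: "take j (rev a @ n # c0) = rev (drop (p - j) a)"
        using j la' by (simp add: take_rev)
      have "p - j < sum_list (take (p - j) a) + k" using apre j by simp
      moreover have "sum_list (take (p - j) a) + sum_list (drop (p - j) a) = sum_list a" by (rule sum_take_drop)
      ultimately show "sum_list (take j (rev a @ n # c0)) < j" using tk la(2) j by simp
    next
      fix j
      assume j: "Suc p \<le> j \<and> j < ?r"
      define t where "t = j - Suc p"
      have tq: "t < q" and jt: "j = Suc p + t" using j by (auto simp: t_def)
      have tk: "take j (rev a @ n # c0) = rev a @ n # take t c0" using jt la' by simp
      have "take t c = take t c0" using ce tq lc0 by (metis c0_def less_or_eq_imp_le take_append take_eq_Nil2 append_Nil2 diff_is_0_eq)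
      moreover have "t < sum_list (take t c) + (n - k)" using cpre tq by simp
      ultimately have "t < sum_list (take t c0) + (n - k)" by simp
      thus "j \<le> sum_list (take j (rev a @ n # c0))" using tk jt la(2) kn by simp
    qed
  qed
  also have "\<dots> = (\<Sum>k\<in>{0..p}. \<Sum>x\<in>(SIGMA n:{k+1..?r}. FP p k \<times> FP (Suc q) (n - k)). ?h (k, x))"
    by (subst sum.Sigma) (auto simp: FP_fin split_def)
  also have "\<dots> = (\<Sum>k=0..p. \<Sum>n=k+1..?r. \<Sum>ac\<in>FP p k \<times> FP (Suc q) (n - k). bb n * (w (fst ac) * w (snd ac)))"
  proof (rule sum.cong[OF refl])
    fix k assume "k \<in> {0..p}"
    show "(\<Sum>x\<in>(SIGMA n:{k+1..?r}. FP p k \<times> FP (Suc q) (n - k)). ?h (k, x)) =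
       (\<Sum>n=k+1..?r. \<Sum>ac\<in>FP p k \<times> FP (Suc q) (n - k). bb n * (w (fst ac) * w (snd ac)))"
      by (subst sum.Sigma) (auto simp: FP_fin split_def)
  qed
  also have "\<dots> = (\<Sum>k=0..p. \<Sum>n=k+1..?r. bb n * (cF p k * cF (Suc q) (n - k)))"
    by (simp only: cF_def sum_cart)
  finally show ?thesis .
qed



definition emb :: "rat fps \<Rightarrow> rat fps fps" where "emb f = Abs_fps (\<lambda>n. fps_const (f $ n))"

lemma emb_nth [simp]: "emb f $ n = fps_const (f $ n)" by (simp add: emb_def)

lemma fps_const_sum: "fps_const (sum f S) = (\<Sum>i\<in>S. fps_const (f i) :: rat fps)"
  by (auto simp: fps_eq_iff fps_sum_nth)

lemma emb_add: "emb (f + g) = emb f + emb g" by (simp add: fps_eq_iff)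
lemma emb_uminus: "emb (- f) = - emb f" by (simp add: fps_eq_iff)
lemma emb_sub: "emb (f - g) = emb f - emb g" by (simp add: fps_eq_iff)
lemma emb_X: "emb fps_X = fps_X" by (simp add: fps_eq_iff)
lemma emb_one: "emb 1 = 1" by (simp add: fps_eq_iff)
lemma emb_mult: "emb (f * g) = emb f * emb g"
  by (simp add: fps_eq_iff fps_mult_nth fps_const_sum)
lemma emb_power: "emb (f ^ n) = emb f ^ n"
  by (induction n) (simp_all add: emb_one emb_mult)

lemma emb_compose:
  assumes "g $ 0 = 0"
  shows "emb f oo emb g = emb (f oo g)"
  by (simp add: fps_eq_iff fps_compose_nth emb_power[symmetric] fps_const_sum)

definition Qj :: "nat \<Rightarrow> rat fps" where "Qj j = fps_shift j bernoulli_fps oo MM"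

lemma shift_rec: "fps_shift j f = fps_const (f $ j) + fps_X * fps_shift (Suc j) (f :: rat fps)"
  by (auto simp: fps_eq_iff fps_X_mult_nth)

lemma Q_rec: "Qj j = fps_const (bernoulli_fps $ j) + MM * Qj (Suc j)"
proof -
  have "Qj j = (fps_const (bernoulli_fps $ j) + fps_X * fps_shift (Suc j) bernoulli_fps) oo MM"
    unfolding Qj_def by (subst shift_rec) simp
  also have "\<dots> = fps_const (bernoulli_fps $ j) + MM * Qj (Suc j)"
    by (simp add: fps_compose_add_distrib fps_compose_mult_distrib Qj_def)
  finally show ?thesis .
qed

lemma Q0: "Qj 0 = bernoulli_fps oo MM" by (simp add: Qj_def)

definition Phi :: "rat fps fps" where "Phi = Abs_fps (\<lambda>j. if j = 0 then 0 else Qj j)"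

lemma ident1: "(fps_X - fps_const MM) * Phi = fps_X * (emb bernoulli_fps - fps_const (bernoulli_fps oo MM))"
proof (rule fps_ext)
  fix n
  show "((fps_X - fps_const MM) * Phi) $ n = (fps_X * (emb bernoulli_fps - fps_const (bernoulli_fps oo MM))) $ n"
  proof (cases n)
    case 0 thus ?thesis by (simp add: Phi_def)
  next
    case (Suc j)
    have l: "((fps_X - fps_const MM) * Phi) $ n = Phi $ j - MM * Phi $ Suc j"
      using Suc by (simp add: algebra_simps)
    show ?thesis
    proof (cases j)
      case 0 thus ?thesis using l Suc Q_rec[of 0] Q0 by (simp add: Phi_def)
    next
      case (Suc j')
      thus ?thesis using l \<open>n = Suc j\<close> Q_rec[of j] by (simp add: Phi_def)
    qed
  qed
qed

definition cc :: "rat fps fps" where "cc = emb MM"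
definition aa :: "rat fps fps" where "aa = fps_const MM"

lemma cc0: "cc $ 0 = 0" by (simp add: cc_def)

lemma ident2: "(cc - aa) * (Phi oo cc) = cc * (emb (bernoulli_fps oo MM) - fps_const (bernoulli_fps oo MM))"
proof -
  have "((fps_X - fps_const MM) * Phi) oo cc = (fps_X * (emb bernoulli_fps - fps_const (bernoulli_fps oo MM))) oo cc"
    using ident1 by simp
  thus ?thesis
    by (simp add: fps_compose_mult_distrib[OF cc0] fps_compose_sub_distrib cc0 aa_def
        cc_def[symmetric] emb_compose[of MM, folded cc_def])
qed

definition gg :: "rat fps fps" where "gg = bvY * bvLx + bvX * bvY * (Phi oo cc)"

lemma e1: "bvY * emb (bernoulli_fps oo MM) = - cc"
proof -
  have "bvY * emb (bernoulli_fps oo MM) = emb (fps_X * (bernoulli_fps oo MM))"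
    by (simp add: bvY_def emb_mult emb_X)
  thus ?thesis by (simp add: key emb_uminus cc_def)
qed

lemma e2: "bvX * fps_const (bernoulli_fps oo MM) = - aa"
  by (simp add: bvX_def key aa_def)

lemma Lx: "bvLx = - aa" by (simp add: bvLx_def aa_def MM_def)
lemma Ly: "bvLy = - cc" by (simp add: bvLy_def cc_def MM_def emb_def fps_eq_iff)

lemma gg_sol: "(bvLx - bvLy) * gg = bvY * bvLx ^ 2 - bvX * bvLy ^ 2"
proof -
  let ?E = "emb (bernoulli_fps oo MM)" and ?K = "fps_const (bernoulli_fps oo MM)"
  have "(bvLx - bvLy) * (bvX * bvY * (Phi oo cc)) = bvX * bvY * ((cc - aa) * (Phi oo cc))"
    by (simp add: Lx Ly algebra_simps)
  also have "\<dots> = bvX * bvY * (cc * (?E - ?K))"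
    by (simp only: ident2)
  also have "\<dots> = bvX * cc * (bvY * ?E) - bvY * cc * (bvX * ?K)"
    by (simp add: algebra_simps)
  also have "\<dots> = bvY * cc * aa - bvX * cc * cc" by (simp add: e1 e2)
  finally have h: "(bvLx - bvLy) * (bvX * bvY * (Phi oo cc)) = bvY * cc * aa - bvX * cc * cc" .
  have "(bvLx - bvLy) * gg = (cc - aa) * bvY * (- aa) + (bvLx - bvLy) * (bvX * bvY * (Phi oo cc))"
    by (simp add: gg_def Lx Ly algebra_simps)
  also have "\<dots> = bvY * aa ^ 2 - bvX * cc ^ 2" unfolding h by (simp add: algebra_simps power2_eq_square)
  also have "\<dots> = bvY * bvLx ^ 2 - bvX * bvLy ^ 2" by (simp add: Lx Ly)
  finally show ?thesis .
qed

lemma D_nz: "bvLx - bvLy \<noteq> 0"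
proof
  assume "bvLx - bvLy = 0"
  hence "((bvLx - bvLy) $ 0) $ 1 = 0" by simp
  thus False by (simp add: bvLx_def bvLy_def log1p_fps_def)
qed

lemma greg: "gregory_fps = gg"
  unfolding gregory_fps_def
proof (rule the_equality)
  show "(bvLx - bvLy) * gg = bvY * bvLx ^ 2 - bvX * bvLy ^ 2" by (rule gg_sol)
  fix g assume "(bvLx - bvLy) * g = bvY * bvLx ^ 2 - bvX * bvLy ^ 2"
  hence "(bvLx - bvLy) * g = (bvLx - bvLy) * gg" using gg_sol by simp
  thus "g = gg" using D_nz by simp
qed

lemma G_formula:
  assumes "m \<ge> 1" "n \<ge> 2"
  shows "G m n = (\<Sum>j=0..n-1. (if j = 0 then 0 else \<Sum>t=0..m-1. bernoulli_fps $ (t + j) * AA (m-1) t) * AA (n-1) j)"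
proof -
  have cp: "cc ^ j = emb (MM ^ j)" for j by (simp add: cc_def emb_power)
  have "gg $ n = fps_X * (Phi oo cc) $ (n - 1)"
    using assms by (simp add: gg_def bvY_def bvLx_def bvX_def mult.assoc)
  hence "G m n = ((Phi oo cc) $ (n - 1)) $ (m - 1)"
    using assms by (simp add: G_def greg fps_X_mult_nth)
  also have "\<dots> = (\<Sum>j=0..n-1. (Phi $ j) $ (m - 1) * AA (n-1) j)"
    by (simp add: fps_compose_nth cp fps_sum_nth AA_def)
  also have "\<dots> = (\<Sum>j=0..n-1. (if j = 0 then 0 else \<Sum>t=0..m-1. bernoulli_fps $ (t + j) * AA (m-1) t) * AA (n-1) j)"
    by (rule sum.cong) (auto simp: Phi_def Qj_def fps_compose_nth AA_def)
  finally show ?thesis .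
qed



lemma sumA: "j \<le> length ns \<Longrightarrow> (\<Sum>k=1..j. ns ! (k - 1)) = sum_list (take j ns)"
proof (induction j)
  case 0 thus ?case by simp
next
  case (Suc j)
  hence "j < length ns" by simp
  thus ?case using Suc by (simp add: take_Suc_conv_app_nth)
qed

lemma sumB: "j \<le> length (ns :: nat list) \<Longrightarrow> (\<Sum>k=j+1..length ns. ns ! (k - 1)) = sum_list (drop j ns)"
proof -
  assume j: "j \<le> length ns"
  have "(\<Sum>k=1..j + (length ns - j). ns ! (k - 1)) = (\<Sum>k=1..j. ns ! (k - 1)) + (\<Sum>k=j+1..j + (length ns - j). ns ! (k - 1))"
    by (rule sum.ub_add_nat) simp
  hence "sum_list ns = sum_list (take j ns) + (\<Sum>k=j+1..length ns. ns ! (k - 1))"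
    using j sumA[of "length ns" ns] sumA[OF j] by simp
  thus ?thesis using sum_take_drop[of j ns] by simp
qed

lemma Ct_eq:
  assumes ir: "i \<le> r"
  shows "C_tuples i r = Cp i r"
proof -
  have "ns \<in> C_tuples i r \<longleftrightarrow> ns \<in> Cp i r" for ns
  proof (cases "length ns = r \<and> sum_list ns = r")
    case False thus ?thesis by (auto simp: C_tuples_def Cp_def)
  next
    case True
    have c1: "(\<Sum>k=1..j. ns ! (k - 1)) = sum_list (take j ns)" if "j < i" for j
      using that True sumA[of j ns] ir by simp
    have c2: "(\<Sum>k=j+1..r. ns ! (k - 1)) \<le> r - j \<longleftrightarrow> j \<le> sum_list (take j ns)" if "j < r" for j
    proof -
      have "(\<Sum>k=j+1..r. ns ! (k - 1)) = sum_list (drop j ns)" using sumB[of j ns] True that by simp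
      moreover have "sum_list (take j ns) + sum_list (drop j ns) = r" using sum_take_drop[of j ns] True by simp
      ultimately show ?thesis using that by linarith
    qed
    show ?thesis using True c1 c2 unfolding C_tuples_def Cp_def by auto
  qed
  thus ?thesis by blast
qed

lemma prod_conv: "length ns = r \<Longrightarrow> (\<Prod>j=1..r. bernoulli (ns ! (j - 1)) / fact (ns ! (j - 1))) = w ns"
proof -
  assume l: "length ns = r"
  have bq: "bernoulli n / fact n = bb n" for n by (simp add: bernoulli_def bb_def)
  have "(\<Prod>j=1..r. bernoulli (ns ! (j - 1)) / fact (ns ! (j - 1))) = (\<Prod>k<r. bb (ns ! k))"
    by (simp add: prod.atLeast1_atMost_eq bq)
  also have "\<dots> = w ns" unfolding l[symmetric]
  proof (induction ns)
    case Nil thus ?case by (simp add: w_def)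
  next
    case (Cons x xs) thus ?case by (simp add: w_def prod.lessThan_Suc_shift del: prod.lessThan_Suc)
  qed
  finally show ?thesis .
qed

lemma C_main: "C_coeff (Suc p) (Suc (p + q)) = (\<Sum>k=0..p. \<Sum>n=k+1..Suc (p+q). bernoulli_fps $ n * AA p k * AA (Suc q) (n - k))"
proof -
  let ?r = "Suc (p + q)"
  have "C_coeff (Suc p) ?r = (-1) ^ ?r * (\<Sum>ns\<in>Cp (Suc p) ?r. w ns)"
    unfolding C_coeff_def Ct_eq[of "Suc p" ?r, OF Suc_le_mono[THEN iffD2, OF le_add1]]
    by (rule arg_cong[where f = "\<lambda>x. (-1) ^ ?r * x"], rule sum.cong[OF refl], rule prod_conv) (simp add: Cp_def)
  also have "\<dots> = (-1) ^ ?r * (\<Sum>k=0..p. \<Sum>n=k+1..?r. bb n * (cF p k * cF (Suc q) (n - k)))"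
    by (simp add: decomp)
  also have "\<dots> = (\<Sum>k=0..p. \<Sum>n=k+1..?r. bernoulli_fps $ n * AA p k * AA (Suc q) (n - k))"
  proof -
    have s: "((-1::rat) ^ ?r) * ((-1) ^ p * (-1) ^ Suc q) = 1"
      by (simp add: power_add[symmetric])
    have tm: "(-1) ^ ?r * (bb n * (cF p k * cF (Suc q) (n - k))) = bernoulli_fps $ n * AA p k * AA (Suc q) (n - k)" for n k
    proof -
      have "(-1) ^ ?r * (bb n * (cF p k * cF (Suc q) (n - k))) = ((-1::rat) ^ ?r * ((-1) ^ p * (-1) ^ Suc q)) * (bb n * AA p k * AA (Suc q) (n - k))"
        by (simp add: cF_AA mult_ac)
      thus ?thesis using s by (simp add: bb_def)
    qed
    have "(-1) ^ ?r * (\<Sum>k=0..p. \<Sum>n=k+1..?r. bb n * (cF p k * cF (Suc q) (n - k))) =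
       (\<Sum>k=0..p. \<Sum>n=k+1..?r. (-1) ^ ?r * (bb n * (cF p k * cF (Suc q) (n - k))))"
      by (simp only: sum_distrib_left)
    also have "\<dots> = (\<Sum>k=0..p. \<Sum>n=k+1..?r. bernoulli_fps $ n * AA p k * AA (Suc q) (n - k))"
      by (simp only: tm)
    finally show ?thesis .
  qed
  finally show ?thesis .
qed



lemma inner_eq:
  assumes t: "t \<le> p"
  shows "(\<Sum>n=t+1..Suc (p+q). bernoulli_fps $ n * AA p t * AA (Suc q) (n - t)) =
         (\<Sum>j=1..Suc q. bernoulli_fps $ (t + j) * AA p t * AA (Suc q) j)"
proof -
  have "(\<Sum>n=t+1..Suc (p+q). bernoulli_fps $ n * AA p t * AA (Suc q) (n - t)) =
        (\<Sum>n=1+t..(Suc (p+q) - t)+t. bernoulli_fps $ n * AA p t * AA (Suc q) (n - t))"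
    using t by (simp add: add.commute)
  also have "\<dots> = (\<Sum>j=1..Suc (p+q) - t. bernoulli_fps $ (j + t) * AA p t * AA (Suc q) (j + t - t))"
    by (rule sum.shift_bounds_cl_nat_ivl)
  also have "\<dots> = (\<Sum>j=1..Suc (p+q) - t. bernoulli_fps $ (t + j) * AA p t * AA (Suc q) j)"
    by (simp add: add.commute)
  also have "\<dots> = (\<Sum>j=1..Suc q. bernoulli_fps $ (t + j) * AA p t * AA (Suc q) j)"
    by (rule sum.mono_neutral_right) (use t in \<open>auto simp: AA_zero\<close>)
  finally show ?thesis .
qed

theorem main_pq: "C_coeff (Suc p) (Suc (p + q)) = G (Suc p) (Suc (Suc q))"
proof -
  have "G (Suc p) (Suc (Suc q)) = (\<Sum>j=0..Suc q. (if j = 0 then 0 else \<Sum>t=0..p. bernoulli_fps $ (t + j) * AA p t) * AA (Suc q) j)"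
  proof -
    have h: "G (Suc p) (Suc (Suc q)) = (\<Sum>j=0..Suc (Suc q) - 1. (if j = 0 then 0 else \<Sum>t=0..Suc p - 1. bernoulli_fps $ (t + j) * AA (Suc p - 1) t) * AA (Suc (Suc q) - 1) j)"
      by (rule G_formula) simp_all
    show ?thesis unfolding h diff_Suc_1 ..
  qed
  also have "\<dots> = (\<Sum>j=1..Suc q. (\<Sum>t=0..p. bernoulli_fps $ (t + j) * AA p t) * AA (Suc q) j)"
    by (simp add: sum.atLeast_Suc_atMost)
  also have "\<dots> = (\<Sum>j=1..Suc q. \<Sum>t=0..p. bernoulli_fps $ (t + j) * AA p t * AA (Suc q) j)"
    by (simp add: sum_distrib_right)
  also have "\<dots> = (\<Sum>t=0..p. \<Sum>j=1..Suc q. bernoulli_fps $ (t + j) * AA p t * AA (Suc q) j)"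
    by (rule sum.swap)
  also have "\<dots> = (\<Sum>t=0..p. \<Sum>n=t+1..Suc (p+q). bernoulli_fps $ n * AA p t * AA (Suc q) (n - t))"
    by (rule sum.cong[OF refl], rule inner_eq[symmetric]) simp
  also have "\<dots> = C_coeff (Suc p) (Suc (p + q))" by (simp add: C_main)
  finally show ?thesis by simp
qed

theorem theorem4p2:
  fixes i r :: nat
  assumes "1 \<le> i" and "i \<le> r"
  shows "C_coeff i r = G i (r - i + 2)"
proof -
  obtain p where p: "i = Suc p" using assms(1) by (cases i) auto
  define q where "q = r - i"
  have r: "r = Suc (p + q)" using assms p by (simp add: q_def)
  have "r - i + 2 = Suc (Suc q)" by (simp add: q_def)
  thus ?thesis using main_pq[of p q] p r by simp
qed

end
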